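(* Let $s\in\mathbb{N}$ and let $H$ be an $s$-periodic generalized Jacobi matrix with data $(p_j,\varepsilon_j,b_j)_{j\in\mathbb{Z}_+}$, and let $P_j,Q_j$ be its associated polynomials. Then its $m$-function is \[ m(\lambda)=\frac{-(P_s(\lambda)+\varepsilon_{s-1}b_{s-1}Q_{s-1}(\lambda))+\sqrt{(P_s(\lambda)-\varepsilon_{s-1}b_{s-1}Q_{s-1}(\lambda))^2-4}}{2\varepsilon_{s-1}b_{s-1}P_{s-1}(\lambda)}, \] where the cut of the square root is the set $E$ and the branch is chosen so that $m(\lambda)\to 0$ as $\lambda\to\infty$.
   Context: For a real monic polynomial $p(\lambda)=\lambda^n+p_{n-1}\lambda^{n-1}+\dots+p_0$, its companion matrix is the $n\times n$ matrix $C_p$ with ones on the subdiagonal, last column $(-p_0,-p_1,\dots,-p_{n-1})^\top$, and zeros elsewhere; its symmetrizator is the Hankel matrix $E_p$ whose $(i,k)$ entry ($1\le i,k\le n$) is $p_{i+k-1}$ if $i+k-1\le n$ (with $p_n=1$) and $0$ otherwise. Data: real monic polynomials $p_j$ of degree $k_j\ge1$, signs $\varepsilon_j\in\{\pm1\}$, numbers $b_j>0$, $j\in\mathbb{Z}_+$. The generalized Jacobi matrix $H$ is the semi-infinite block tridiagonal matrix with diagonal blocks $A_j=C_{p_j}$, subdiagonal blocks $B_j$ ($k_{j+1}\times k_j$) whose only nonzero entry is $b_j$ in position $(1,k_j)$, and superdiagonal blocks $\widetilde B_j$ ($k_j\times k_{j+1}$) whose only nonzero entry is $\widetilde b_j=\varepsilon_j\varepsilon_{j+1}b_j$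 in position $(1,k_{j+1})$. It is $s$-periodic if $p_{j+s}=p_j$, $b_{j+s}=b_j$, $\varepsilon_{j+s}=\varepsilon_j$ for all $j$; then $H$ is a bounded operator on $\ell^2_{[0,\infty)}$. Let $G=\mathrm{diag}(\varepsilon_0E_{p_0}^{-1},\varepsilon_1E_{p_1}^{-1},\dots)$ and $[x,y]=(Gx,y)_{\ell^2}$. The $m$-function of $H$ is $m(\lambda)=[(H-\lambda)^{-1}e,e]$, $e=(1,0,0,\dots)^\top$. Set $\mathcal W_j(\lambda)=\begin{pmatrix}0&-\varepsilon_j/b_j\\ \varepsilon_jb_j& p_j(\lambda)/b_j\end{pmatrix}$, $\mathcal W_{[0,j]}=\mathcal W_0\mathcal W_1\cdots\mathcal W_j$, and define polynomials $P_0=1$, $Q_0=0$, $(-Q_{j+1},P_{j+1})^\top=\mathcal W_{[0,j]}(0,1)^\top$. The monodromy matrix is $T(\lambda)=\mathcal W_{[0,s-1]}(\lambda)=\begin{pmatrix}-\varepsilon_{s-1}b_{s-1}Q_{s-1}&-Q_s\\ \varepsilon_{s-1}b_{s-1}P_{s-1}&P_s\end{pmatrix}$. Let $w_1(\lambda),w_2(\lambda)$ be the roots of $\det(T(\lambda)-w)=0$ and $E=\{\lambda\in\mathbb{C}:|w_1(\lambda)|=|w_2(\lambda)|\}$. *)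

theory Defs
  imports "HOL-Analysis.Analysis" "HOL-Computational_Algebra.Polynomial"
begin

section \<open>Generalized Jacobi matrices (0-based indexing throughout)\<close>

definition GJ_data :: "(nat \<Rightarrow> real poly) \<Rightarrow> (nat \<Rightarrow> real) \<Rightarrow> (nat \<Rightarrow> real) \<Rightarrow> bool" where
  "GJ_data p eps b \<longleftrightarrow>
     (\<forall>j. lead_coeff (p j) = 1 \<and> degree (p j) \<ge> 1 \<and> (eps j = 1 \<or> eps j = -1) \<and> b j > 0)"

definition periodic_data ::
  "nat \<Rightarrow> (nat \<Rightarrow> real poly) \<Rightarrow> (nat \<Rightarrow> real) \<Rightarrow> (nat \<Rightarrow> real) \<Rightarrow> bool" where
  "periodic_data s p eps b \<longleftrightarrow>
     (\<forall>j. p (j + s) = p j \<and> b (j + s) = b j \<and> eps (j + s) = eps j)"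

definition companion :: "real poly \<Rightarrow> nat \<Rightarrow> nat \<Rightarrow> real" where
  "companion p i k =
     (if i < degree p \<and> k < degree p then
        (if k = degree p - 1 then - coeff p i else if i = k + 1 then 1 else 0)
      else 0)"

definition symmetrizator :: "real poly \<Rightarrow> nat \<Rightarrow> nat \<Rightarrow> real" where
  "symmetrizator p i k = (if i < degree p \<and> k < degree p then coeff p (i + k + 1) else 0)"

definition block_off :: "(nat \<Rightarrow> real poly) \<Rightarrow> nat \<Rightarrow> nat" where
  "block_off p j = (\<Sum>i<j. degree (p i))"

definition block_of :: "(nat \<Rightarrow> real poly) \<Rightarrow> nat \<Rightarrow> nat" where
  "block_of p n = (LEAST j. n < block_off p (Suc j))"

definition GJ_matrix ::
  "(nat \<Rightarrow> real poly) \<Rightarrow> (nat \<Rightarrow> real) \<Rightarrow> (nat \<Rightarrow> real) \<Rightarrow> nat \<Rightarrow> nat \<Rightarrow> complex" where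
  "GJ_matrix p eps b i k =
     (let j = block_of p i; r = i - block_off p j;
          l = block_of p k; c = k - block_off p l
      in complex_of_real
        (if j = l then companion (p j) r c
         else if j = Suc l then (if r = 0 \<and> c = degree (p l) - 1 then b l else 0)
         else if l = Suc j then (if r = 0 \<and> c = degree (p l) - 1 then eps j * eps l * b j else 0)
         else 0))"

definition l2 :: "(nat \<Rightarrow> complex) \<Rightarrow> bool" where
  "l2 x \<longleftrightarrow> summable (\<lambda>n. (cmod (x n))\<^sup>2)"

definition GJ_apply ::
  "(nat \<Rightarrow> real poly) \<Rightarrow> (nat \<Rightarrow> real) \<Rightarrow> (nat \<Rightarrow> real) \<Rightarrow> (nat \<Rightarrow> complex) \<Rightarrow> nat \<Rightarrow> complex" where
  "GJ_apply p eps b x i = (\<Sum>k. GJ_matrix p eps b i k * x k)"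

text \<open>Resolvent set of the (bounded) operator H on l^2: H - lambda is a bijection of l^2
  (its inverse is then automatically bounded).\<close>
definition GJ_resolvent_set ::
  "(nat \<Rightarrow> real poly) \<Rightarrow> (nat \<Rightarrow> real) \<Rightarrow> (nat \<Rightarrow> real) \<Rightarrow> complex set" where
  "GJ_resolvent_set p eps b =
     {z. \<forall>y. l2 y \<longrightarrow> (\<exists>!x. l2 x \<and> (\<forall>i. GJ_apply p eps b x i - z * x i = y i))}"

definition e0 :: "nat \<Rightarrow> complex" where
  "e0 i = (if i = 0 then 1 else 0)"

definition GJ_resolvent_e ::
  "(nat \<Rightarrow> real poly) \<Rightarrow> (nat \<Rightarrow> real) \<Rightarrow> (nat \<Rightarrow> real) \<Rightarrow> complex \<Rightarrow> nat \<Rightarrow> complex" where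
  "GJ_resolvent_e p eps b z =
     (THE x. l2 x \<and> (\<forall>i. GJ_apply p eps b x i - z * x i = e0 i))"

text \<open>Gram operator G = diag(eps_0 E_{p_0}^{-1}, eps_1 E_{p_1}^{-1}, ...).\<close>
definition gram_apply ::
  "(nat \<Rightarrow> real poly) \<Rightarrow> (nat \<Rightarrow> real) \<Rightarrow> (nat \<Rightarrow> complex) \<Rightarrow> nat \<Rightarrow> complex" where
  "gram_apply p eps x i =
     (let j = block_of p i; n = degree (p j); off = block_off p j;
          u = (THE u :: nat \<Rightarrow> complex. (\<forall>c\<ge>n. u c = 0) \<and>
                 (\<forall>r<n. (\<Sum>c<n. complex_of_real (symmetrizator (p j) r c) * u c) = x (off + r)))
      in complex_of_real (eps j) * u (i - off))"

definition indef_inner ::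
  "(nat \<Rightarrow> real poly) \<Rightarrow> (nat \<Rightarrow> real) \<Rightarrow> (nat \<Rightarrow> complex) \<Rightarrow> (nat \<Rightarrow> complex) \<Rightarrow> complex" where
  "indef_inner p eps x y = (\<Sum>i. gram_apply p eps x i * cnj (y i))"

definition m_function ::
  "(nat \<Rightarrow> real poly) \<Rightarrow> (nat \<Rightarrow> real) \<Rightarrow> (nat \<Rightarrow> real) \<Rightarrow> complex \<Rightarrow> complex" where
  "m_function p eps b z = indef_inner p eps (GJ_resolvent_e p eps b z) e0"

definition Wmat ::
  "(nat \<Rightarrow> real poly) \<Rightarrow> (nat \<Rightarrow> real) \<Rightarrow> (nat \<Rightarrow> real) \<Rightarrow> nat \<Rightarrow> complex \<Rightarrow> complex^2^2" where
  "Wmat p eps b j z =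
     vector [vector [0, - complex_of_real (eps j / b j)],
             vector [complex_of_real (eps j * b j), poly (map_poly complex_of_real (p j)) z / complex_of_real (b j)]]"

fun Wprod ::
  "(nat \<Rightarrow> real poly) \<Rightarrow> (nat \<Rightarrow> real) \<Rightarrow> (nat \<Rightarrow> real) \<Rightarrow> nat \<Rightarrow> complex \<Rightarrow> complex^2^2" where
  "Wprod p eps b 0 z = Wmat p eps b 0 z"
| "Wprod p eps b (Suc j) z = Wprod p eps b j z ** Wmat p eps b (Suc j) z"

definition Ppol :: "(nat \<Rightarrow> real poly) \<Rightarrow> (nat \<Rightarrow> real) \<Rightarrow> (nat \<Rightarrow> real) \<Rightarrow> nat \<Rightarrow> complex \<Rightarrow> complex" where
  "Ppol p eps b j z =
     (case j of 0 \<Rightarrow> 1 | Suc i \<Rightarrow> (Wprod p eps b i z *v vector [0, 1]) $ 2)"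

definition Qpol :: "(nat \<Rightarrow> real poly) \<Rightarrow> (nat \<Rightarrow> real) \<Rightarrow> (nat \<Rightarrow> real) \<Rightarrow> nat \<Rightarrow> complex \<Rightarrow> complex" where
  "Qpol p eps b j z =
     (case j of 0 \<Rightarrow> 0 | Suc i \<Rightarrow> - (Wprod p eps b i z *v vector [0, 1]) $ 1)"

definition monodromy :: "nat \<Rightarrow> (nat \<Rightarrow> real poly) \<Rightarrow> (nat \<Rightarrow> real) \<Rightarrow> (nat \<Rightarrow> real) \<Rightarrow> complex \<Rightarrow> complex^2^2" where
  "monodromy s p eps b z = Wprod p eps b (s - 1) z"

text \<open>w1, w2 are the roots (with multiplicity) of w^2 - tr(T) w + det(T) = det(T - w).\<close>
definition Eset :: "nat \<Rightarrow> (nat \<Rightarrow> real poly) \<Rightarrow> (nat \<Rightarrow> real) \<Rightarrow> (nat \<Rightarrow> real) \<Rightarrow> complex set" where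
  "Eset s p eps b =
     {z. \<exists>w1 w2. w1 + w2 = trace (monodromy s p eps b z) \<and> w1 * w2 = det (monodromy s p eps b z)
               \<and> cmod w1 = cmod w2}"

end

theory Submission
  imports Defs
begin


definition sq2 :: "complex \<Rightarrow> complex" where
  "sq2 w = w * csqrt (1 - 4 / w^2)"

definition Bad :: "complex set" where
  "Bad = {w. Im w = 0 \<and> -2 \<le> Re w \<and> Re w \<le> 2}"

lemma sq_pos_real_imp_real:
  fixes w :: complex
  assumes "Im (w^2) = 0" "Re (w^2) > 0"
  shows "Im w = 0"
  using assms by (auto simp: power2_eq_square)

lemma notin_Bad_arg:
  assumes "w \<notin> Bad"
  shows "1 - 4 / w^2 \<notin> \<real>\<^sub>\<le>\<^sub>0"
proof
  assume h: "1 - 4 / w^2 \<in> \<real>\<^sub>\<le>\<^sub>0"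
  then obtain t where t: "t \<le> 0" "1 - 4 / w^2 = complex_of_real t"
    by (auto simp: nonpos_Reals_def)
  have w0: "w \<noteq> 0" using assms by (auto simp: Bad_def)
  have "4 / w^2 = complex_of_real (1 - t)" using t by (simp add: algebra_simps)
  hence "w^2 = 4 / complex_of_real (1 - t)" using w0 t
    by (simp add: field_simps)
  hence w2: "w^2 = complex_of_real (4 / (1 - t))" by simp
  have "Im w = 0" by (rule sq_pos_real_imp_real) (use w2 t in auto)
  then obtain x where x: "w = complex_of_real x" by (metis complex_is_Real_iff Reals_cases)
  have "x^2 = 4 / (1 - t)" using w2 x by (metis of_real_eq_iff of_real_power)
  moreover have "4 / (1 - t) \<le> 4" using t by (simp add: divide_le_eq)
  ultimately have "x^2 \<le> 2^2" by simp
  hence "\<bar>x\<bar> \<le> 2" using abs_le_square_iff[of x 2] by simp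
  hence "w \<in> Bad" using x by (auto simp: Bad_def)
  thus False using assms by simp
qed

lemma Re_csqrt_pos:
  assumes "u \<notin> \<real>\<^sub>\<le>\<^sub>0"
  shows "Re (csqrt u) > 0"
proof -
  have "Re (csqrt u) \<ge> 0" by (rule Re_csqrt)
  moreover have "Re (csqrt u) \<noteq> 0"
  proof
    assume "Re (csqrt u) = 0"
    hence e: "csqrt u = \<i> * complex_of_real (Im (csqrt u))" by (simp add: complex_eq_iff)
    have "u = (csqrt u)^2" by simp
    also have "\<dots> = (\<i> * complex_of_real (Im (csqrt u)))^2" using e by simp
    also have "\<dots> = - complex_of_real ((Im (csqrt u))^2)" by (simp add: power_mult_distrib)
    finally have "u = complex_of_real (- ((Im (csqrt u))^2))" by simp
    moreover have "complex_of_real (- ((Im (csqrt u))^2)) \<in> \<real>\<^sub>\<le>\<^sub>0"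
      by (simp only: nonpos_Reals_of_real_iff) simp
    ultimately have "u \<in> \<real>\<^sub>\<le>\<^sub>0" by simp
    thus False using assms by simp
  qed
  ultimately show ?thesis by simp
qed

lemma sq2_sq: "w \<noteq> 0 \<Longrightarrow> (sq2 w)^2 = w^2 - 4"
  by (simp add: sq2_def power_mult_distrib field_simps)

lemma sq2_close:
  assumes "w \<noteq> 0"
  shows "cmod (sq2 w - w) \<le> 4 / cmod w"
proof -
  define a where "a = csqrt (1 - 4 / w^2)"
  have Ra: "Re a \<ge> 0" unfolding a_def by (rule Re_csqrt)
  have n1: "cmod (a + 1) \<ge> 1"
    using complex_Re_le_cmod[of "a+1"] Ra by simp
  have "(a - 1) * (a + 1) = - 4 / w^2"
    unfolding a_def by (simp add: algebra_simps power2_eq_square[symmetric])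
  moreover have a1: "a + 1 \<noteq> 0" using n1 by auto
  ultimately have am: "a - 1 = - 4 / (w^2 * (a + 1))"
    by (metis (no_types, lifting) divide_divide_eq_left nonzero_mult_div_cancel_right)
  have "sq2 w - w = w * (a - 1)" by (simp add: sq2_def a_def algebra_simps)
  also have "\<dots> = w * (- 4 / (w^2 * (a + 1)))" by (simp only: am)
  also have "\<dots> = - 4 / (w * (a + 1))" using assms a1
    by (metis (no_types, lifting) divide_divide_eq_left divide_minus_left mult.commute nonzero_mult_div_cancel_left power2_eq_square times_divide_eq_right)
  finally have "cmod (sq2 w - w) = 4 / (cmod w * cmod (a + 1))"
    by (simp add: norm_divide norm_mult)
  also have "\<dots> \<le> 4 / cmod w"
  proof -
    have "cmod w \<le> cmod w * cmod (a + 1)" using n1 by (simp add: mult_le_cancel_left1)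
    thus ?thesis using assms n1 by (intro divide_left_mono) (auto intro!: mult_pos_pos)
  qed
  finally show ?thesis .
qed

lemma sq2_small:
  assumes "w \<notin> Bad"
  shows "cmod ((w - sq2 w) / 2) < 1"
proof -
  have w0: "w \<noteq> 0" using assms by (auto simp: Bad_def)
  define a where "a = csqrt (1 - 4 / w^2)"
  have Ra: "Re a > 0" unfolding a_def by (rule Re_csqrt_pos[OF notin_Bad_arg[OF assms]])
  define u where "u = w * (1 - a) / 2"
  define v where "v = w * (1 + a) / 2"
  have uv: "u * v = 1"
  proof -
    have "a^2 = 1 - 4 / w^2" unfolding a_def by simp
    hence "u * v = w^2 * (1 - a^2) / 4" unfolding u_def v_def by (simp add: algebra_simps power2_eq_square)
    also have "\<dots> = 1" using w0 \<open>a^2 = _\<close> by (simp add: field_simps)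
    finally show ?thesis .
  qed
  have "cmod (1 - a) < cmod (1 + a)"
  proof -
    have "(cmod (1 - a))^2 = (1 - Re a)^2 + (Im a)^2" by (simp add: cmod_def)
    moreover have "(cmod (1 + a))^2 = (1 + Re a)^2 + (Im a)^2" by (simp add: cmod_def)
    ultimately have "(cmod (1 - a))^2 < (cmod (1 + a))^2" using Ra by (simp add: power2_eq_square algebra_simps)
    thus ?thesis by (simp add: power_less_imp_less_base)
  qed
  hence "cmod u < cmod v" unfolding u_def v_def using w0 by (simp add: norm_mult norm_divide)
  moreover have "cmod u * cmod v = 1" using uv by (metis norm_mult norm_one)
  ultimately have "cmod u < 1"
    by (smt (verit, best) mult_le_cancel_right1 norm_ge_zero)
  moreover have "(w - sq2 w) / 2 = u" by (simp add: u_def sq2_def a_def algebra_simps)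
  ultimately show ?thesis by simp
qed



lemma vec2_eq: "(v::'a^2) = w \<longleftrightarrow> v$1 = w$1 \<and> v$2 = w$2"
  by (metis exhaust_2 vec_eq_iff)

lemma mat2_mult:
  "(vector [vector [a, b], vector [c, d]] :: 'a::comm_ring_1^2^2) ** vector [vector [e, f], vector [g, h]]
   = (vector [vector [a*e+b*g, a*f+b*h], vector [c*e+d*g, c*f+d*h]] :: 'a^2^2)"
  by (simp add: vec2_eq[of "_ :: 'a^2^2"] vec2_eq[of "_ :: 'a^2"] matrix_matrix_mult_def sum_2)

locale gj =
  fixes p :: "nat \<Rightarrow> real poly" and eps b :: "nat \<Rightarrow> real"
  assumes gjd: "GJ_data p eps b"
begin

lemma b_pos: "b j > 0" using gjd by (auto simp: GJ_data_def)
lemma b_nz: "b j \<noteq> 0" using b_pos[of j] by simp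
lemma eps_sq: "eps j * eps j = 1"
proof -
  have "eps j = 1 \<or> eps j = -1" using gjd by (auto simp: GJ_data_def)
  thus ?thesis by auto
qed
lemma eps_nz: "eps j \<noteq> 0" using eps_sq[of j] by auto
lemma deg_pos: "degree (p j) \<ge> 1" using gjd by (auto simp: GJ_data_def)
lemma monic: "lead_coeff (p j) = 1" using gjd by (auto simp: GJ_data_def)

definition pc :: "nat \<Rightarrow> complex poly" where
  "pc j = map_poly complex_of_real (p j)"

lemma degree_pc: "degree (pc j) = degree (p j)"
  unfolding pc_def by (rule degree_map_poly) simp

lemma coeff_pc: "coeff (pc j) i = complex_of_real (coeff (p j) i)"
  unfolding pc_def by (simp add: coeff_map_poly)

lemma pc_nz: "pc j \<noteq> 0"
  using deg_pos[of j] degree_pc[of j] by auto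

definition kap :: "nat \<Rightarrow> complex" where
  "kap j = complex_of_real (eps (Suc j) * eps j * b j)"

fun PPc :: "nat \<Rightarrow> complex poly" where
  "PPc 0 = 1"
| "PPc (Suc 0) = smult (1 / complex_of_real (b 0)) (pc 0)"
| "PPc (Suc (Suc j)) = smult (1 / complex_of_real (b (Suc j))) (pc (Suc j) * PPc (Suc j) - smult (kap j) (PPc j))"

fun QQc :: "nat \<Rightarrow> complex poly" where
  "QQc 0 = 0"
| "QQc (Suc 0) = [: complex_of_real (eps 0 / b 0) :]"
| "QQc (Suc (Suc j)) = smult (1 / complex_of_real (b (Suc j))) (pc (Suc j) * QQc (Suc j) - smult (kap j) (QQc j))"

definition PP where "PP j z = poly (PPc j) z"
definition QQ where "QQ j z = poly (QQc j) z"
definition pz where "pz j z = poly (pc j) z"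

lemma PP_rec: "PP (Suc (Suc j)) z = (pz (Suc j) z * PP (Suc j) z - kap j * PP j z) / complex_of_real (b (Suc j))"
  by (simp add: PP_def pz_def)
lemma QQ_rec: "QQ (Suc (Suc j)) z = (pz (Suc j) z * QQ (Suc j) z - kap j * QQ j z) / complex_of_real (b (Suc j))"
  by (simp add: QQ_def pz_def)
lemma PP_0: "PP 0 z = 1" by (simp add: PP_def)
lemma QQ_0: "QQ 0 z = 0" by (simp add: QQ_def)
lemma PP_1: "PP (Suc 0) z = pz 0 z / complex_of_real (b 0)" by (simp add: PP_def pz_def)
lemma QQ_1: "QQ (Suc 0) z = complex_of_real (eps 0 / b 0)" by (simp add: QQ_def)

lemma Wprod_eq:
  "Wprod p eps b j z = vector [vector [- complex_of_real (eps j * b j) * QQ j z, - QQ (Suc j) z],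
                                vector [complex_of_real (eps j * b j) * PP j z, PP (Suc j) z]]"
proof (induction j)
  case 0
  show ?case by (simp add: Wmat_def PP_0 QQ_0 PP_1 QQ_1 pz_def pc_def)
next
  case (Suc j)
  have bn: "complex_of_real (b (Suc j)) \<noteq> 0" using b_nz by simp
  have e: "complex_of_real (eps j) * complex_of_real (eps j) = 1"
    by (metis eps_sq of_real_mult of_real_1)
  have W: "Wmat p eps b (Suc j) z = vector [vector [0, - complex_of_real (eps (Suc j) / b (Suc j))],
             vector [complex_of_real (eps (Suc j) * b (Suc j)), pz (Suc j) z / complex_of_real (b (Suc j))]]"
    by (simp add: Wmat_def pz_def pc_def)
  have e12: "(- complex_of_real (eps j * b j) * QQ j z) * (- complex_of_real (eps (Suc j) / b (Suc j)))
       + (- QQ (Suc j) z) * (pz (Suc j) z / complex_of_real (b (Suc j))) = - QQ (Suc (Suc j)) z"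
    unfolding QQ_rec kap_def using bn by (simp add: field_simps)
  have e22: "(complex_of_real (eps j * b j) * PP j z) * (- complex_of_real (eps (Suc j) / b (Suc j)))
       + PP (Suc j) z * (pz (Suc j) z / complex_of_real (b (Suc j))) = PP (Suc (Suc j)) z"
    unfolding PP_rec kap_def using bn by (simp add: field_simps)
  show ?case
    unfolding Wprod.simps Suc.IH W mat2_mult e12 e22
    by (simp add: mult.commute)
qed

lemma casoratian:
  "complex_of_real (eps j * b j) * (PP j z * QQ (Suc j) z - QQ j z * PP (Suc j) z) = 1"
proof (induction j rule: nat_less_induct)
  case (1 n)
  show ?case
  proof (cases n)
    case 0
    then show ?thesis using b_nz[of 0] eps_sq[of 0]
      by (simp add: PP_0 QQ_0 PP_1 QQ_1 field_simps) (metis of_real_1 of_real_mult)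
  next
    case (Suc j)
    have IH: "complex_of_real (eps j * b j) * (PP j z * QQ (Suc j) z - QQ j z * PP (Suc j) z) = 1"
      using 1 Suc by simp
    have bn: "complex_of_real (b (Suc j)) \<noteq> 0" using b_nz by simp
    have e: "complex_of_real (eps (Suc j)) * complex_of_real (eps (Suc j)) = 1"
      by (metis eps_sq of_real_mult of_real_1)
    have "complex_of_real (eps (Suc j) * b (Suc j)) *
          (PP (Suc j) z * QQ (Suc (Suc j)) z - QQ (Suc j) z * PP (Suc (Suc j)) z)
        = complex_of_real (eps (Suc j)) * kap j * (QQ (Suc j) z * PP j z - PP (Suc j) z * QQ j z)"
      unfolding PP_rec QQ_rec using bn by (simp add: field_simps)
    also have "\<dots> = complex_of_real (eps j * b j) * (PP j z * QQ (Suc j) z - QQ j z * PP (Suc j) z)"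
      unfolding kap_def using e by (simp add: algebra_simps)
    finally show ?thesis using IH Suc by simp
  qed
qed

definition off where "off j = (\<Sum>i<j. degree (p i))"

lemma off_Suc: "off (Suc j) = off j + degree (p j)" by (simp add: off_def)
lemma off_mono_lt: "i < j \<Longrightarrow> off i < off j"
proof (induction j)
  case 0 then show ?case by simp
next
  case (Suc j) then show ?case using deg_pos[of j] by (auto simp: off_Suc less_Suc_eq)
qed
lemma off_mono: "i \<le> j \<Longrightarrow> off i \<le> off j"
  using off_mono_lt by (metis le_eq_less_or_eq)
lemma off_ge: "j \<le> off j"
proof (induction j)
  case (Suc j) thus ?case using deg_pos[of j] by (simp add: off_Suc)
qed (simp add: off_def)

lemma PPc_deg: "PPc j \<noteq> 0 \<and> degree (PPc j) = off j"
proof (induction j rule: PPc.induct)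
  case 1 then show ?case by (simp add: off_def)
next
  case 2 then show ?case using b_nz[of 0] pc_nz[of 0] by (simp add: off_def degree_pc)
next
  case (3 j)
  have d1: "degree (pc (Suc j) * PPc (Suc j)) = off (Suc (Suc j))"
    using 3 pc_nz by (simp add: degree_mult_eq degree_pc off_Suc)
  have d2: "degree (smult (kap j) (PPc j)) < off (Suc (Suc j))"
    using 3 off_mono_lt[of j "Suc (Suc j)"] by (simp add: le_less_trans[OF degree_smult_le])
  have d: "degree (pc (Suc j) * PPc (Suc j) - smult (kap j) (PPc j)) = off (Suc (Suc j))"
    using d1 d2 by (metis degree_add_eq_left diff_conv_add_uminus degree_minus)
  have "off (Suc (Suc j)) > 0" using off_mono_lt[of 0 "Suc (Suc j)"] by simp
  hence nz: "pc (Suc j) * PPc (Suc j) - smult (kap j) (PPc j) \<noteq> 0" using d by auto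
  show ?case using d nz b_nz[of "Suc j"] by simp
qed

lemma QQc_deg: "j = 0 \<or> degree (QQc j) < off j"
proof (induction j rule: QQc.induct)
  case 1 then show ?case by simp
next
  case 2 then show ?case using deg_pos[of 0] by (simp add: off_def)
next
  case (3 j)
  have d1: "degree (pc (Suc j) * QQc (Suc j)) < off (Suc (Suc j))"
    using 3 degree_mult_le[of "pc (Suc j)" "QQc (Suc j)"] by (simp add: degree_pc off_Suc)
  have "degree (QQc j) \<le> off j" using 3 by (cases j) auto
  hence d2: "degree (smult (kap j) (QQc j)) < off (Suc (Suc j))"
    using off_mono_lt[of j "Suc (Suc j)"] degree_smult_le[of "kap j" "QQc j"] by linarith
  show ?case using degree_diff_less[OF d1 d2]
    by (simp add: le_less_trans[OF degree_smult_le])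
qed

end



lemma poly_sum_le:
  fixes q :: "complex poly"
  assumes "degree q \<le> n"
  shows "poly q z = (\<Sum>i\<le>n. coeff q i * z ^ i)"
  unfolding poly_altdef
  by (rule sum.mono_neutral_left) (use assms in \<open>auto simp: coeff_eq_0\<close>)

lemma poly_div_pow_tendsto:
  fixes q :: "complex poly"
  assumes "degree q \<le> n"
  shows "((\<lambda>z. poly q z / z ^ n) \<longlongrightarrow> coeff q n) at_infinity"
proof -
  have ev: "eventually (\<lambda>z. (\<Sum>i\<le>n. coeff q i * inverse z ^ (n - i)) = poly q z / z ^ n) at_infinity"
  proof -
    have "eventually (\<lambda>z::complex. z \<noteq> 0) at_infinity"
      by (rule eventually_not_equal_at_infinity)
    thus ?thesis
    proof (rule eventually_mono)
      fix z :: complex assume z: "z \<noteq> 0"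
      have "poly q z / z ^ n = (\<Sum>i\<le>n. coeff q i * z ^ i / z ^ n)"
        by (simp add: poly_sum_le[OF assms] sum_divide_distrib)
      also have "\<dots> = (\<Sum>i\<le>n. coeff q i * inverse z ^ (n - i))"
      proof (rule sum.cong)
        fix i assume "i \<in> {..n}"
        hence "n = i + (n - i)" by simp
        hence "z ^ n = z ^ i * z ^ (n - i)" by (metis power_add)
        thus "coeff q i * z ^ i / z ^ n = coeff q i * inverse z ^ (n - i)"
          using z by (simp add: field_simps power_inverse)
      qed simp
      finally show "(\<Sum>i\<le>n. coeff q i * inverse z ^ (n - i)) = poly q z / z ^ n" by simp
    qed
  qed
  have "((\<lambda>z. \<Sum>i\<le>n. coeff q i * inverse z ^ (n - i)) \<longlongrightarrow> (\<Sum>i\<le>n. coeff q i * 0 ^ (n - i))) at_infinity"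
    by (intro tendsto_sum tendsto_mult_left tendsto_power tendsto_inverse_0)
  moreover have "(\<Sum>i\<le>n. coeff q i * (0::complex) ^ (n - i)) = coeff q n"
  proof -
    have "(\<Sum>i\<le>n. coeff q i * (0::complex) ^ (n - i)) = (\<Sum>i\<le>n. if i = n then coeff q i else 0)"
      by (rule sum.cong) auto
    thus ?thesis by simp
  qed
  ultimately show ?thesis using tendsto_cong[OF ev] by simp
qed

lemma vec2_mult_01: "((vector [vector [a, b], vector [c, d]] :: 'a::comm_ring_1^2^2) *v vector [0, 1]) = (vector [b, d] :: 'a^2)"
  by (simp add: vec2_eq[of "_ :: 'a^2"] matrix_vector_mult_def sum_2)

context gj
begin

lemma Ppol_eq: "Ppol p eps b j z = PP j z"
  by (cases j) (simp_all add: Ppol_def PP_0 Wprod_eq vec2_mult_01)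

lemma Qpol_eq: "Qpol p eps b j z = QQ j z"
  by (cases j) (simp_all add: Qpol_def QQ_0 Wprod_eq vec2_mult_01)

end

locale gjp = gj +
  fixes s :: nat
  assumes s1: "s \<ge> 1" and per: "periodic_data s p eps b"
begin

definition cc where "cc = complex_of_real (eps (s - 1) * b (s - 1))"
definition tau where "tau z = PP s z - cc * QQ (s - 1) z"
definition rr where "rr z = sq2 (tau z)"

lemma cc_nz: "cc \<noteq> 0" using b_nz eps_nz by (simp add: cc_def)

lemma trace_mon: "trace (monodromy s p eps b z) = tau z"
  using s1 by (simp add: monodromy_def Wprod_eq trace_def sum_2 tau_def cc_def)

lemma det_mon: "det (monodromy s p eps b z) = 1"
proof -
  have "det (monodromy s p eps b z) = cc * (PP (s-1) z * QQ (Suc (s-1)) z - QQ (s-1) z * PP (Suc (s-1)) z)"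
    by (simp add: monodromy_def Wprod_eq det_2 cc_def algebra_simps)
  also have "\<dots> = 1" unfolding cc_def by (rule casoratian)
  finally show ?thesis .
qed

lemma notE_tau: "z \<notin> Eset s p eps b \<Longrightarrow> tau z \<notin> Bad"
proof -
  assume nz: "z \<notin> Eset s p eps b"
  show "tau z \<notin> Bad"
  proof
    assume "tau z \<in> Bad"
    then obtain x where x: "tau z = complex_of_real x" "\<bar>x\<bar> \<le> 2"
      unfolding Bad_def by (auto intro!: exI[of _ "Re (tau z)"] simp: complex_eq_iff)
    define y where "y = sqrt (1 - x^2 / 4)"
    have y2: "y^2 = 1 - x^2/4"
    proof -
      have "x^2 \<le> 2^2" using x(2) by (metis abs_le_square_iff abs_numeral)
      thus ?thesis unfolding y_def by (simp add: real_sqrt_pow2)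
    qed
    define w1 where "w1 = Complex (x/2) y"
    define w2 where "w2 = Complex (x/2) (-y)"
    have "w1 + w2 = trace (monodromy s p eps b z)"
      using x by (simp add: trace_mon w1_def w2_def complex_eq_iff)
    moreover have "w1 * w2 = det (monodromy s p eps b z)"
      using y2 by (simp add: det_mon w1_def w2_def complex_eq_iff power2_eq_square algebra_simps)
    moreover have "cmod w1 = cmod w2" by (simp add: w1_def w2_def cmod_def)
    ultimately have "z \<in> Eset s p eps b" unfolding Eset_def by blast
    thus False using nz by simp
  qed
qed

lemma Bad_nz: "w \<notin> Bad \<Longrightarrow> w \<noteq> 0" by (auto simp: Bad_def)

definition tauc where "tauc = PPc s - smult cc (QQc (s - 1))"
lemma tau_poly: "tau z = poly tauc z" by (simp add: tau_def tauc_def PP_def QQ_def)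

lemma deg_tauc: "degree tauc = off s \<and> coeff tauc (off s) \<noteq> 0"
proof -
  have dq: "degree (smult cc (QQc (s - 1))) < off s"
  proof -
    have "degree (QQc (s-1)) \<le> off (s-1)" using QQc_deg[of "s-1"] by auto
    moreover have "off (s-1) < off s" using s1 off_mono_lt by simp
    ultimately show ?thesis using degree_smult_le[of cc "QQc (s-1)"] by linarith
  qed
  have dp: "degree (PPc s) = off s" using PPc_deg by simp
  have "degree tauc = off s" unfolding tauc_def
    using dp dq by (metis degree_add_eq_left diff_conv_add_uminus degree_minus)
  moreover have "coeff tauc (off s) = coeff (PPc s) (off s)"
  proof -
    have "degree (QQc (s-1)) < off s"
      using QQc_deg[of "s-1"] s1 off_mono_lt[of "s-1" s] by auto
    thus ?thesis unfolding tauc_def by (simp add: coeff_eq_0)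
  qed
  moreover have "coeff (PPc s) (off s) \<noteq> 0" using PPc_deg[of s] by (metis leading_coeff_0_iff)
  ultimately show ?thesis by simp
qed

lemma rr_holo: "rr holomorphic_on (- Eset s p eps b)"
proof -
  let ?S = "- Eset s p eps b"
  have h: "(\<lambda>z. poly tauc z) holomorphic_on ?S"
    by (rule poly_holomorphic_on[OF holomorphic_on_ident])
  have nz: "\<And>z. z \<in> ?S \<Longrightarrow> poly tauc z \<noteq> 0"
    using notE_tau Bad_nz tau_poly by auto
  have h2: "(\<lambda>z. 1 - 4 / (poly tauc z)^2) holomorphic_on ?S"
    by (intro holomorphic_on_diff holomorphic_on_const holomorphic_on_divide holomorphic_on_power h)
       (use nz in auto)
  have h3: "(\<lambda>z. csqrt (1 - 4 / (poly tauc z)^2)) holomorphic_on ?S"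
    by (rule holomorphic_on_csqrt'[OF h2]) (use notE_tau notin_Bad_arg tau_poly in auto)
  have "(\<lambda>z. poly tauc z * csqrt (1 - 4 / (poly tauc z)^2)) holomorphic_on ?S"
    by (rule holomorphic_on_mult[OF h h3])
  moreover have "rr = (\<lambda>z. poly tauc z * csqrt (1 - 4 / (poly tauc z)^2))"
    by (simp add: rr_def sq2_def tau_poly fun_eq_iff)
  ultimately show ?thesis by simp
qed

lemma rr_sq: "z \<notin> Eset s p eps b \<Longrightarrow> (rr z)^2 = (tau z)^2 - 4"
  using sq2_sq Bad_nz notE_tau by (simp add: rr_def)

lemma tau_infty: "filterlim tau at_infinity at_infinity"
proof -
  define n where "n = off s"
  have n1: "n \<ge> 1" using off_ge[of s] s1 by (simp add: n_def)
  have L: "((\<lambda>z. tau z / z ^ n) \<longlongrightarrow> coeff tauc n) at_infinity"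
    unfolding tau_poly n_def by (rule poly_div_pow_tendsto) (simp add: deg_tauc)
  have Ln: "coeff tauc n \<noteq> 0" using deg_tauc by (simp add: n_def)
  have zn: "filterlim (\<lambda>z::complex. z ^ n) at_infinity at_infinity"
    using n1 by (intro filterlim_power_at_infinity filterlim_ident) auto
  have fl: "filterlim (\<lambda>z. (tau z / z ^ n) * z ^ n) at_infinity at_infinity"
    by (rule tendsto_mult_filterlim_at_infinity[OF L Ln zn])
  have ev: "eventually (\<lambda>z. (tau z / z ^ n) * z ^ n = tau z) at_infinity"
  proof -
    have "eventually (\<lambda>z::complex. z \<noteq> 0) at_infinity"
      by (rule eventually_not_equal_at_infinity)
    thus ?thesis by (rule eventually_mono) simp
  qed
  show ?thesis using filterlim_cong[OF refl refl ev, of at_infinity] fl by simp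
qed

lemma rr_minus_tau: "((\<lambda>z. rr z - tau z) \<longlongrightarrow> 0) at_infinity"
proof (rule Lim_null_comparison)
  show "eventually (\<lambda>z. norm (rr z - tau z) \<le> 4 * norm (inverse (tau z))) at_infinity"
    using filterlim_at_infinity_imp_eventually_ne[OF tau_infty, of 0]
    by (rule eventually_mono) (use sq2_close in \<open>auto simp: rr_def norm_inverse divide_inverse\<close>)
  have "((\<lambda>z. inverse (tau z)) \<longlongrightarrow> 0) at_infinity"
    by (rule filterlim_compose[OF tendsto_inverse_0 tau_infty])
  hence "((\<lambda>z. norm (inverse (tau z))) \<longlongrightarrow> 0) at_infinity" by (rule tendsto_norm_zero)
  thus "((\<lambda>z. 4 * norm (inverse (tau z))) \<longlongrightarrow> 0) at_infinity"
    using tendsto_mult_left[of _ 0 _ 4] by force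
qed

lemma main_limit:
  "((\<lambda>z. (- (PP s z + cc * QQ (s - 1) z) + rr z) / (2 * cc * PP (s - 1) z)) \<longlongrightarrow> 0) at_infinity"
proof -
  define m where "m = off (s - 1)"
  define L where "L = coeff (PPc (s-1)) m"
  have L0: "L \<noteq> 0"
  proof -
    have "lead_coeff (PPc (s-1)) \<noteq> 0" using PPc_deg[of "s-1"] leading_coeff_0_iff by blast
    thus ?thesis using PPc_deg[of "s-1"] unfolding L_def m_def by metis
  qed
  have A: "((\<lambda>z. PP (s-1) z / z ^ m) \<longlongrightarrow> L) at_infinity"
    unfolding PP_def L_def by (rule poly_div_pow_tendsto) (simp add: PPc_deg m_def)
  have cq: "coeff (QQc (s-1)) m = 0"
    using QQc_deg[of "s-1"] by (auto simp: m_def coeff_eq_0)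
  have B: "((\<lambda>z. QQ (s-1) z / z ^ m) \<longlongrightarrow> 0) at_infinity"
  proof -
    have "degree (QQc (s-1)) \<le> m" using QQc_deg[of "s-1"] by (auto simp: m_def)
    from poly_div_pow_tendsto[OF this] show ?thesis unfolding QQ_def cq .
  qed
  have C: "((\<lambda>z. poly 1 z / z ^ m) \<longlongrightarrow> coeff (1 :: complex poly) m) at_infinity"
    by (rule poly_div_pow_tendsto) simp
  have lim: "((\<lambda>z. ((rr z - tau z) * (poly 1 z / z ^ m) - 2 * cc * (QQ (s-1) z / z ^ m))
                 / (2 * cc * (PP (s-1) z / z ^ m))) \<longlongrightarrow>
              ((0 * coeff (1 :: complex poly) m - 2 * cc * 0) / (2 * cc * L))) at_infinity"
    using cc_nz L0 by (intro tendsto_intros rr_minus_tau A B C) auto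
  have ev: "eventually (\<lambda>z. ((rr z - tau z) * (poly 1 z / z ^ m) - 2 * cc * (QQ (s-1) z / z ^ m))
                 / (2 * cc * (PP (s-1) z / z ^ m))
          = (- (PP s z + cc * QQ (s - 1) z) + rr z) / (2 * cc * PP (s - 1) z)) at_infinity"
    using eventually_not_equal_at_infinity[of 0]
  proof (rule eventually_mono)
    fix z :: complex assume z: "z \<noteq> 0"
    have "((rr z - tau z) * (poly 1 z / z ^ m) - 2 * cc * (QQ (s-1) z / z ^ m))
           = (- (PP s z + cc * QQ (s - 1) z) + rr z) / z ^ m"
      using z by (simp add: tau_def field_simps)
    moreover have "2 * cc * (PP (s-1) z / z ^ m) = (2 * cc * PP (s - 1) z) / z ^ m" by simp
    ultimately show "((rr z - tau z) * (poly 1 z / z ^ m) - 2 * cc * (QQ (s-1) z / z ^ m))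
                 / (2 * cc * (PP (s-1) z / z ^ m))
          = (- (PP s z + cc * QQ (s - 1) z) + rr z) / (2 * cc * PP (s - 1) z)"
      using z by (simp add: divide_divide_eq_left' )
  qed
  show ?thesis using tendsto_cong[OF ev] lim by simp
qed

end



context gj
begin

abbreviation d where "d j \<equiv> degree (p j)"

lemma block_off_eq: "block_off p = off"
  by (simp add: fun_eq_iff block_off_def off_def)

lemma blk: "c < d j \<Longrightarrow> block_of p (off j + c) = j"
  unfolding block_of_def block_off_eq
proof (rule Least_equality)
  assume "c < d j" thus "off j + c < off (Suc j)" by (simp add: off_Suc)
next
  fix y assume "off j + c < off (Suc y)"
  thus "j \<le> y"
    using off_mono[of "Suc y" j] by (cases "j \<le> y") auto
qed

lemma blk_decomp: "\<exists>l c. n = off l + c \<and> c < d l"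
proof -
  define l where "l = block_of p n"
  have ex: "\<exists>j. n < off (Suc j)" using off_ge[of "Suc n"] by (intro exI[of _ n]) simp
  have l1: "n < off (Suc l)" unfolding l_def block_of_def block_off_eq by (rule LeastI_ex[OF ex])
  have l2: "off l \<le> n"
  proof (cases l)
    case 0 then show ?thesis by (simp add: off_def)
  next
    case (Suc l')
    have "\<not> n < off (Suc l')"
      using not_less_Least[of l' "\<lambda>j. n < off (Suc j)"] Suc l_def
      unfolding block_of_def block_off_eq by simp
    thus ?thesis using Suc by simp
  qed
  show ?thesis using l1 l2 by (intro exI[of _ l] exI[of _ "n - off l"]) (simp add: off_Suc)
qed

lemma off_inj: "off l + c = off l' + c' \<Longrightarrow> c < d l \<Longrightarrow> c' < d l' \<Longrightarrow> l = l' \<and> c = c'"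
proof -
  assume h: "off l + c = off l' + c'" "c < d l" "c' < d l'"
  have "l = block_of p (off l + c)" using blk[OF h(2)] by simp
  also have "\<dots> = l'" using h(1) blk[OF h(3)] by simp
  finally have "l = l'" .
  thus ?thesis using h(1) by simp
qed

lemma GJ_entry:
  assumes "r < d j" "c < d l"
  shows "GJ_matrix p eps b (off j + r) (off l + c) = complex_of_real
     (if j = l then (if c = d j - 1 then - coeff (p j) r else if r = c + 1 then 1 else 0)
      else if j = Suc l then (if r = 0 \<and> c = d l - 1 then b l else 0)
      else if l = Suc j then (if r = 0 \<and> c = d l - 1 then eps j * eps l * b j else 0)
      else 0)"
proof -
  have bj: "block_of p (off j + r) = j" using blk assms by simp
  have bl: "block_of p (off l + c) = l" using blk assms by simp
  show ?thesis
    unfolding GJ_matrix_def Let_def block_off_eq bj bl add_diff_cancel_left'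
    using assms by (cases "j = l") (simp_all add: companion_def)
qed


lemma off_eq_iff: "c < d l \<Longrightarrow> c' < d l' \<Longrightarrow> (off l + c = off l' + c') \<longleftrightarrow> (l = l' \<and> c = c')"
  using off_inj by blast

lemma dm1: "d j - 1 < d j" using deg_pos[of j] by simp

definition qq :: "complex \<Rightarrow> nat \<Rightarrow> nat \<Rightarrow> complex" where
  "qq z j r = (\<Sum>c<d j. complex_of_real (coeff (p j) (r + c + 1)) * z ^ c)"

lemma S_eq: "(\<Sum>c<Suc (d j). complex_of_real (coeff (p j) (r + c)) * z ^ c)
   = complex_of_real (coeff (p j) r) + z * qq z j r"
  unfolding sum.lessThan_Suc_shift qq_def sum_distrib_left
  by (simp add: algebra_simps)

lemma qq_pz: "complex_of_real (coeff (p j) 0) + z * qq z j 0 = pz j z"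
proof -
  have "pz j z = (\<Sum>c\<le>d j. coeff (pc j) c * z ^ c)"
    unfolding pz_def by (simp add: poly_altdef degree_pc)
  also have "\<dots> = (\<Sum>c<Suc (d j). complex_of_real (coeff (p j) (0 + c)) * z ^ c)"
    by (simp add: lessThan_Suc_atMost coeff_pc)
  finally show ?thesis using S_eq[of j 0 z] by simp
qed

lemma qq_step: "r \<ge> 1 \<Longrightarrow> qq z j (r - 1) = complex_of_real (coeff (p j) r) + z * qq z j r"
proof -
  assume r: "r \<ge> 1"
  have "qq z j (r - 1) = (\<Sum>c<d j. complex_of_real (coeff (p j) (r + c)) * z ^ c)"
    unfolding qq_def using r by (intro sum.cong) auto
  also have "\<dots> = (\<Sum>c<Suc (d j). complex_of_real (coeff (p j) (r + c)) * z ^ c)"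
    using r by (simp add: coeff_eq_0)
  finally show ?thesis using S_eq by simp
qed

lemma qq_last: "qq z j (d j - 1) = 1"
proof -
  have "qq z j (d j - 1) = (\<Sum>c<d j. if c = 0 then 1 else 0)"
    unfolding qq_def
  proof (rule sum.cong)
    fix c assume c: "c \<in> {..<d j}"
    show "complex_of_real (coeff (p j) (d j - 1 + c + 1)) * z ^ c = (if c = 0 then 1 else 0)"
    proof (cases "c = 0")
      case True
      then show ?thesis using deg_pos[of j] monic[of j] by simp
    next
      case False
      then show ?thesis using deg_pos[of j] by (simp add: coeff_eq_0)
    qed
  qed simp
  also have "\<dots> = 1" using deg_pos[of j] by simp
  finally show ?thesis .
qed

definition xv :: "complex \<Rightarrow> (nat \<Rightarrow> complex) \<Rightarrow> nat \<Rightarrow> complex" where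
  "xv z t n = t (block_of p n) * qq z (block_of p n) (n - off (block_of p n))"

lemma xv_at: "c < d l \<Longrightarrow> xv z t (off l + c) = t l * qq z l c"
  by (simp add: xv_def blk)

lemma xv_last: "xv z t (off l + (d l - 1)) = t l"
  using xv_at[OF dm1] qq_last by simp

lemma sums_pt: "(\<lambda>k. if k = a then v else 0) sums v"
  using sums_single[of a "\<lambda>_. v"] by simp

lemma row_pos:
  assumes r: "1 \<le> r" "r < d j"
  shows "GJ_apply p eps b (xv z t) (off j + r) - z * xv z t (off j + r) = e0 (off j + r)"
proof -
  define cf where "cf = complex_of_real (coeff (p j) r)"
  have pt: "GJ_matrix p eps b (off j + r) k * xv z t k =
     (if k = off j + (d j - 1) then - cf * t j else 0) + (if k = off j + (r - 1) then t j * qq z j (r - 1) else 0)" for k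
  proof -
    obtain l c where k: "k = off l + c" "c < d l" using blk_decomp by blast
    have r1: "r - 1 < d j" using r by simp
    show ?thesis
      unfolding k(1) GJ_entry[OF r(2) k(2)] xv_at[OF k(2)]
        off_eq_iff[OF k(2) dm1] off_eq_iff[OF k(2) r1]
      using r k(2) qq_last[of z l] by (auto simp: cf_def)
  qed
  have "(\<lambda>k. GJ_matrix p eps b (off j + r) k * xv z t k) sums (- cf * t j + t j * qq z j (r - 1))"
    unfolding pt by (intro sums_add sums_pt)
  hence "GJ_apply p eps b (xv z t) (off j + r) = - cf * t j + t j * qq z j (r - 1)"
    unfolding GJ_apply_def by (rule sums_unique[symmetric])
  moreover have "xv z t (off j + r) = t j * qq z j r" using xv_at r by simp
  moreover have "e0 (off j + r) = 0" using r by (simp add: e0_def)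
  ultimately show ?thesis using qq_step[OF r(1), of z j] by (simp add: cf_def algebra_simps)
qed

lemma row_00:
  "GJ_apply p eps b (xv z t) (off 0 + 0) - z * xv z t (off 0 + 0)
    = - pz 0 z * t 0 + complex_of_real (eps 0 * eps 1 * b 0) * t 1"
proof -
  define cf where "cf = complex_of_real (coeff (p 0) 0)"
  have d0: "0 < d 0" using deg_pos[of 0] by simp
  have pt: "GJ_matrix p eps b (off 0 + 0) k * xv z t k =
     (if k = off 0 + (d 0 - 1) then - cf * t 0 else 0)
     + (if k = off 1 + (d 1 - 1) then complex_of_real (eps 0 * eps 1 * b 0) * t 1 else 0)" for k
  proof -
    obtain l c where k: "k = off l + c" "c < d l" using blk_decomp by blast
    show ?thesis
      unfolding k(1) GJ_entry[OF d0 k(2)] xv_at[OF k(2)]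
        off_eq_iff[OF k(2) dm1]
      using k(2) qq_last[of z l] by (auto simp: cf_def)
  qed
  have "(\<lambda>k. GJ_matrix p eps b (off 0 + 0) k * xv z t k) sums
         (- cf * t 0 + complex_of_real (eps 0 * eps 1 * b 0) * t 1)"
    unfolding pt by (intro sums_add sums_pt)
  hence "GJ_apply p eps b (xv z t) (off 0 + 0) = - cf * t 0 + complex_of_real (eps 0 * eps 1 * b 0) * t 1"
    unfolding GJ_apply_def by (rule sums_unique[symmetric])
  moreover have "xv z t (off 0 + 0) = t 0 * qq z 0 0" using xv_at d0 by blast
  ultimately show ?thesis unfolding qq_pz[of 0 z, symmetric] by (simp add: cf_def algebra_simps)
qed

lemma row_S0:
  "GJ_apply p eps b (xv z t) (off (Suc i) + 0) - z * xv z t (off (Suc i) + 0)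
    = complex_of_real (b i) * t i - pz (Suc i) z * t (Suc i)
      + complex_of_real (eps (Suc i) * eps (Suc (Suc i)) * b (Suc i)) * t (Suc (Suc i))"
proof -
  define j where "j = Suc i"
  define cf where "cf = complex_of_real (coeff (p j) 0)"
  have d0: "0 < d j" using deg_pos[of j] by simp
  have pt: "GJ_matrix p eps b (off j + 0) k * xv z t k =
     (if k = off j + (d j - 1) then - cf * t j else 0)
     + (if k = off i + (d i - 1) then complex_of_real (b i) * t i else 0)
     + (if k = off (Suc j) + (d (Suc j) - 1) then complex_of_real (eps j * eps (Suc j) * b j) * t (Suc j) else 0)" for k
  proof -
    obtain l c where k: "k = off l + c" "c < d l" using blk_decomp by blast
    show ?thesis
      unfolding k(1) GJ_entry[OF d0 k(2)] xv_at[OF k(2)]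
        off_eq_iff[OF k(2) dm1]
      using k(2) qq_last[of z l] by (auto simp: cf_def j_def)
  qed
  have "(\<lambda>k. GJ_matrix p eps b (off j + 0) k * xv z t k) sums
         (- cf * t j + complex_of_real (b i) * t i + complex_of_real (eps j * eps (Suc j) * b j) * t (Suc j))"
    unfolding pt by (intro sums_add sums_pt)
  hence "GJ_apply p eps b (xv z t) (off j + 0) = - cf * t j + complex_of_real (b i) * t i + complex_of_real (eps j * eps (Suc j) * b j) * t (Suc j)"
    unfolding GJ_apply_def by (rule sums_unique[symmetric])
  moreover have "xv z t (off j + 0) = t j * qq z j 0" using xv_at d0 by blast
  ultimately show ?thesis unfolding j_def[symmetric] qq_pz[of j z, symmetric] by (simp add: cf_def algebra_simps)
qed

lemma row_all:
  assumes R0: "- pz 0 z * t 0 + complex_of_real (eps 0 * eps 1 * b 0) * t 1 = 1"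
    and RS: "\<And>i. complex_of_real (b i) * t i - pz (Suc i) z * t (Suc i)
      + complex_of_real (eps (Suc i) * eps (Suc (Suc i)) * b (Suc i)) * t (Suc (Suc i)) = 0"
  shows "GJ_apply p eps b (xv z t) n - z * xv z t n = e0 n"
proof -
  obtain j r where n: "n = off j + r" "r < d j" using blk_decomp by blast
  show ?thesis
  proof (cases "r = 0")
    case False
    then show ?thesis using row_pos[of r j z t] n by simp
  next
    case True
    show ?thesis
    proof (cases j)
      case 0
      then show ?thesis using row_00[of z t] R0 n True by (simp add: e0_def off_def)
    next
      case (Suc i)
      have "off (Suc i) \<noteq> 0" using off_ge[of "Suc i"] by simp
      then show ?thesis using row_S0[of z t i] RS[of i] n True Suc by (simp add: e0_def)
    qed
  qed
qed

lemma sym_unique: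
  assumes v0: "\<forall>c\<ge>d j. v c = 0"
    and vs: "\<forall>r<d j. (\<Sum>c<d j. complex_of_real (symmetrizator (p j) r c) * v c) = 0"
  shows "v c = 0"
proof (induction c rule: less_induct)
  case (less c)
  show ?case
  proof (cases "c < d j")
    case False then show ?thesis using v0 by simp
  next
    case True
    define r where "r = d j - 1 - c"
    have r: "r < d j" using True by (simp add: r_def)
    have "0 = (\<Sum>c'<d j. complex_of_real (symmetrizator (p j) r c') * v c')" using vs r by simp
    also have "\<dots> = (\<Sum>c'<d j. if c' = c then v c else 0)"
    proof (rule sum.cong)
      fix c' assume c': "c' \<in> {..<d j}"
      show "complex_of_real (symmetrizator (p j) r c') * v c' = (if c' = c then v c else 0)"
      proof (cases "c' < c")
        case True then show ?thesis using less by simp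
      next
        case False
        show ?thesis
        proof (cases "c' = c")
          case True
          have "r + c + 1 = d j" using \<open>c < d j\<close> by (simp add: r_def)
          then show ?thesis using True c' r monic[of j] by (simp add: symmetrizator_def)
        next
          case False
          hence "r + c' + 1 > d j" using \<open>\<not> c' < c\<close> \<open>c < d j\<close> by (simp add: r_def)
          then show ?thesis using False by (simp add: symmetrizator_def coeff_eq_0)
        qed
      qed
    qed simp
    also have "\<dots> = v c" using True by simp
    finally show ?thesis by simp
  qed
qed

lemma gram0: "gram_apply p eps (xv z t) 0 = complex_of_real (eps 0) * t 0"
proof -
  have b0: "block_of p 0 = 0" using blk[of 0 0] deg_pos[of 0] by (simp add: off_def)
  have o0: "block_off p 0 = 0" by (simp add: block_off_def)
  define P where "P = (\<lambda>u :: nat \<Rightarrow> complex. (\<forall>c\<ge>d 0. u c = 0) \<and>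
                 (\<forall>r<d 0. (\<Sum>c<d 0. complex_of_real (symmetrizator (p 0) r c) * u c) = xv z t (0 + r)))"
  define uu where "uu = (\<lambda>c. if c < d 0 then t 0 * z ^ c else 0)"
  have Puu: "P uu"
    unfolding P_def
  proof (intro conjI allI impI)
    fix c assume "d 0 \<le> c" thus "uu c = 0" by (simp add: uu_def)
  next
    fix r assume r: "r < d 0"
    have "xv z t (0 + r) = t 0 * qq z 0 r" using xv_at[of r 0 z t] r by (simp add: off_def)
    also have "\<dots> = (\<Sum>c<d 0. complex_of_real (symmetrizator (p 0) r c) * uu c)"
      unfolding qq_def sum_distrib_left
    proof (rule sum.cong)
      fix c assume c: "c \<in> {..<d 0}"
      show "t 0 * (complex_of_real (coeff (p 0) (r + c + 1)) * z ^ c)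
          = complex_of_real (symmetrizator (p 0) r c) * uu c"
        using r c by (simp add: uu_def symmetrizator_def)
    qed simp
    finally show "(\<Sum>c<d 0. complex_of_real (symmetrizator (p 0) r c) * uu c) = xv z t (0 + r)" by simp
  qed
  have uniq: "u = uu" if Pu: "P u" for u
  proof
    fix c
    have u0: "\<forall>c\<ge>d 0. u c = 0" and us: "\<forall>r<d 0. (\<Sum>c<d 0. complex_of_real (symmetrizator (p 0) r c) * u c) = xv z t (0 + r)"
      using Pu unfolding P_def by blast+
    have uu0: "\<forall>c\<ge>d 0. uu c = 0" and uus: "\<forall>r<d 0. (\<Sum>c<d 0. complex_of_real (symmetrizator (p 0) r c) * uu c) = xv z t (0 + r)"
      using Puu unfolding P_def by blast+
    have "(\<lambda>c. u c - uu c) c = 0"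
    proof (rule sym_unique[of 0])
      show "\<forall>c\<ge>d 0. u c - uu c = 0" using u0 uu0 by simp
      show "\<forall>r<d 0. (\<Sum>c<d 0. complex_of_real (symmetrizator (p 0) r c) * (u c - uu c)) = 0"
      proof (intro allI impI)
        fix r assume r: "r < d 0"
        have "(\<Sum>c<d 0. complex_of_real (symmetrizator (p 0) r c) * (u c - uu c))
          = (\<Sum>c<d 0. complex_of_real (symmetrizator (p 0) r c) * u c)
            - (\<Sum>c<d 0. complex_of_real (symmetrizator (p 0) r c) * uu c)"
          by (simp only: right_diff_distrib sum_subtractf)
        also have "\<dots> = 0" using us uus r by simp
        finally show "(\<Sum>c<d 0. complex_of_real (symmetrizator (p 0) r c) * (u c - uu c)) = 0" .
      qed
    qed
    thus "u c = uu c" by simp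
  qed
  have "(THE u. P u) = uu" by (rule the1_equality) (use Puu uniq in blast)+
  hence "(THE u. P u) 0 = t 0" using deg_pos[of 0] by (simp add: uu_def)
  moreover have "gram_apply p eps (xv z t) 0 = complex_of_real (eps 0) * (THE u. P u) (0 - 0)"
    unfolding gram_apply_def Let_def b0 o0 P_def by (rule refl)
  ultimately show ?thesis by simp
qed

end



lemma summable_pow_div:
  fixes a :: real
  assumes a: "0 < a" "a < 1" and N: "0 < N"
  shows "summable (\<lambda>n. a ^ (n div N))"
proof -
  define \<rho> where "\<rho> = root N a"
  have r0: "0 < \<rho>" using a N by (simp add: \<rho>_def)
  have r1: "\<rho> < 1" using a N by (simp add: \<rho>_def)
  have rN: "\<rho> ^ N = a" using a N by (simp add: \<rho>_def real_root_pow_pos)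
  have bnd: "norm (a ^ (n div N)) \<le> \<rho> ^ n / \<rho> ^ N" for n
  proof -
    have "a ^ (n div N) = \<rho> ^ (N * (n div N))" by (simp add: rN[symmetric] power_mult)
    moreover have "\<rho> ^ (N * (n div N) + N) \<le> \<rho> ^ n"
    proof (rule power_decreasing)
      have "n < N * (n div N) + N"
        using N by (metis add.commute div_mult_mod_eq mod_less_divisor mult.commute nat_add_left_cancel_less)
      thus "n \<le> N * (n div N) + N" by simp
    qed (use r0 r1 in auto)
    ultimately have "a ^ (n div N) * \<rho> ^ N \<le> \<rho> ^ n" by (simp add: power_add)
    thus ?thesis using r0 a by (simp add: field_simps)
  qed
  have "summable (\<lambda>n. \<rho> ^ n / \<rho> ^ N)"
    by (intro summable_divide summable_geometric) (use r0 r1 in auto)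
  thus ?thesis by (rule summable_comparison_test[rotated]) (use bnd in auto)
qed

context gjp
begin

lemma per_all: "p (j + s) = p j \<and> b (j + s) = b j \<and> eps (j + s) = eps j"
  using per by (simp add: periodic_data_def)

lemma per_k: "p (j + k * s) = p j \<and> b (j + k * s) = b j \<and> eps (j + k * s) = eps j"
proof (induction k)
  case (Suc k)
  have e: "j + Suc k * s = (j + k * s) + s" by simp
  show ?case unfolding e using Suc per_all[of "j + k * s"] by simp
qed simp

lemma p_mod: "p j = p (j mod s)"
  using per_k[of "j mod s" "j div s"] by simp

lemma pz_per: "pz (j + s) z = pz j z" by (simp add: pz_def pc_def per_all)
lemma kap_per: "kap (j + s) = kap j"
  using per_all[of j] per_all[of "Suc j"] by (simp add: kap_def)

definition ww where "ww z = (tau z - rr z) / 2"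
definition mu where "mu z = (- (PP s z + cc * QQ (s - 1) z) + rr z) / (2 * cc * PP (s - 1) z)"
definition yy where "yy z j = QQ j z + mu z * PP j z"
definition tt where "tt z j = complex_of_real (eps j) * yy z j"

lemma ceps [simp]: "complex_of_real (eps j) * complex_of_real (eps j) = 1"
  by (metis eps_sq of_real_mult of_real_1)

lemma ceps2 [simp]: "complex_of_real (eps j) * (complex_of_real (eps j) * x) = x"
  by (simp add: mult.assoc[symmetric] ceps)

lemma y_rec: "complex_of_real (b (Suc j)) * yy z (Suc (Suc j)) = pz (Suc j) z * yy z (Suc j) - kap j * yy z j"
  using b_nz[of "Suc j"] by (simp add: yy_def PP_rec QQ_rec field_simps)

context
  fixes z assumes zE: "z \<notin> Eset s p eps b" and P0: "PP (s - 1) z \<noteq> 0"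
begin

lemma ww_small: "cmod (ww z) < 1"
  using sq2_small[OF notE_tau[OF zE]] by (simp add: ww_def rr_def)

lemma ident_ii: "cc * (QQ (s - 1) z + mu z * PP (s - 1) z) = - ww z"
  using P0 cc_nz by (simp add: mu_def ww_def tau_def field_simps)

lemma ident_i: "QQ s z + mu z * PP s z = ww z * mu z"
proof -
  define P' where "P' = PP (s-1) z"
  define Q' where "Q' = QQ (s-1) z"
  define P where "P = PP s z"
  define Q where "Q = QQ s z"
  define r where "r = rr z"
  define A where "A = P + cc * Q'"
  have cas: "cc * (P' * Q - Q' * P) = 1"
    using casoratian[of "s - 1" z] s1 by (simp add: cc_def P'_def Q'_def P_def Q_def)
  have rsq: "r^2 = (P - cc * Q')^2 - 4" using rr_sq[OF zE] by (simp add: r_def tau_def P_def Q'_def)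
  have X: "2 * cc * P' * mu z = r - A"
    using P0 cc_nz by (simp add: mu_def P'_def A_def P_def Q'_def r_def field_simps)
  have w: "ww z = (P - cc * Q' - r) / 2" by (simp add: ww_def tau_def P_def Q'_def r_def)
  have "2 * cc * P' * (Q + mu z * P - ww z * mu z) = 2 * cc * P' * Q + (2 * cc * P' * mu z) * (P - ww z)"
    by (simp add: algebra_simps)
  also have "\<dots> = 2 * cc * P' * Q + (r - A) * (P - (P - cc * Q' - r) / 2)" by (simp only: X w)
  also have "\<dots> = 2 * cc * P' * Q + (r^2 - A^2) / 2"
    by (simp add: A_def field_simps power2_eq_square)
  also have "\<dots> = 2 * (cc * (P' * Q - Q' * P)) - 2"
    unfolding rsq A_def by (simp add: field_simps power2_eq_square)
  also have "\<dots> = 0" using cas by simp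
  finally have "2 * cc * P' * (Q + mu z * P - ww z * mu z) = 0" .
  hence "Q + mu z * P - ww z * mu z = 0" using P0 cc_nz by (simp add: P'_def)
  thus ?thesis by (simp add: Q_def P_def)
qed

lemma y_per: "yy z (j + s) = ww z * yy z j \<and> yy z (Suc j + s) = ww z * yy z (Suc j)"
proof (induction j)
  case 0
  have e0: "yy z s = ww z * yy z 0"
    using ident_i by (simp add: yy_def PP_0 QQ_0)
  have k: "kap (s - 1) = complex_of_real (eps 0) * cc"
    using per_all[of 0] s1 by (simp add: kap_def cc_def)
  have i2: "cc * yy z (s - 1) = - ww z" using ident_ii by (simp add: yy_def)
  have bs: "b s = b 0" "pz s z = pz 0 z" using per_all[of 0] pz_per[of 0 z] by simp_all
  have "complex_of_real (b 0) * yy z (Suc s) = complex_of_real (b s) * yy z (Suc s)" using bs by simp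
  also have "\<dots> = pz s z * yy z s - kap (s - 1) * yy z (s - 1)"
    using y_rec[of "s - 1" z] s1 by simp
  also have "\<dots> = pz 0 z * (ww z * yy z 0) - complex_of_real (eps 0) * (cc * yy z (s - 1))"
    unfolding k bs e0 by (simp add: mult.assoc)
  also have "\<dots> = ww z * (pz 0 z * yy z 0 + complex_of_real (eps 0))"
    unfolding i2 by (simp add: algebra_simps)
  finally have "complex_of_real (b 0) * yy z (Suc s) = ww z * (pz 0 z * yy z 0 + complex_of_real (eps 0))" .
  moreover have h1: "complex_of_real (b 0) * yy z (Suc 0) = pz 0 z * yy z 0 + complex_of_real (eps 0)"
    using b_nz[of 0] by (simp add: yy_def PP_1 QQ_1 PP_0 QQ_0 field_simps)
  moreover have "complex_of_real (b 0) * (ww z * yy z (Suc 0)) = ww z * (complex_of_real (b 0) * yy z (Suc 0))"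
    by (simp only: mult.left_commute)
  ultimately have "complex_of_real (b 0) * yy z (Suc s) = complex_of_real (b 0) * (ww z * yy z (Suc 0))"
    by simp
  hence "yy z (Suc s) = ww z * yy z (Suc 0)" using b_nz[of 0] by simp
  thus ?case using e0 by simp
next
  case (Suc j)
  have "complex_of_real (b (Suc j + s)) * yy z (Suc (Suc j + s))
      = pz (Suc j + s) z * yy z (Suc j + s) - kap (j + s) * yy z (j + s)"
    using y_rec[of "j + s" z] by simp
  hence "complex_of_real (b (Suc j)) * yy z (Suc (Suc j) + s)
      = ww z * (pz (Suc j) z * yy z (Suc j) - kap j * yy z j)"
    using Suc.IH pz_per[of "Suc j" z] kap_per[of j] per_all[of "Suc j"] by (simp add: algebra_simps)
  also have "\<dots> = ww z * (complex_of_real (b (Suc j)) * yy z (Suc (Suc j)))"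
    unfolding y_rec[of j z] ..
  also have "\<dots> = complex_of_real (b (Suc j)) * (ww z * yy z (Suc (Suc j)))"
    by (simp only: mult.left_commute)
  finally have "yy z (Suc (Suc j) + s) = ww z * yy z (Suc (Suc j))" using b_nz[of "Suc j"] by simp
  thus ?case using Suc.IH by simp
qed

lemma y_pow: "yy z (i + k * s) = ww z ^ k * yy z i"
proof (induction k)
  case (Suc k)
  have e: "i + Suc k * s = (i + k * s) + s" by simp
  show ?case unfolding e using Suc y_per[of "i + k * s"] by simp
qed simp

lemma R0: "- pz 0 z * tt z 0 + complex_of_real (eps 0 * eps 1 * b 0) * tt z 1 = 1"
proof -
  have h1: "complex_of_real (b 0) * yy z (Suc 0) = pz 0 z * yy z 0 + complex_of_real (eps 0)"
    using b_nz[of 0] by (simp add: yy_def PP_1 QQ_1 PP_0 QQ_0 field_simps)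
  have "complex_of_real (eps 0 * eps 1 * b 0) * tt z 1
      = complex_of_real (eps 0) * (complex_of_real (b 0) * yy z (Suc 0))"
    unfolding tt_def by (simp add: algebra_simps)
  also have "\<dots> = complex_of_real (eps 0) * (pz 0 z * yy z 0) + 1"
    unfolding h1 by (simp add: algebra_simps)
  finally show ?thesis unfolding tt_def by (simp add: algebra_simps)
qed

lemma RS: "complex_of_real (b i) * tt z i - pz (Suc i) z * tt z (Suc i)
      + complex_of_real (eps (Suc i) * eps (Suc (Suc i)) * b (Suc i)) * tt z (Suc (Suc i)) = 0"
proof -
  have e: "complex_of_real (eps (Suc (Suc i))) * complex_of_real (eps (Suc (Suc i))) = 1" by (rule ceps)
  have e1: "complex_of_real (eps (Suc i)) * complex_of_real (eps (Suc i)) = 1" by (rule ceps)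
  have "complex_of_real (eps (Suc i) * eps (Suc (Suc i)) * b (Suc i)) * tt z (Suc (Suc i))
     = complex_of_real (eps (Suc i)) * (complex_of_real (eps (Suc (Suc i))) * complex_of_real (eps (Suc (Suc i))))
       * (complex_of_real (b (Suc i)) * yy z (Suc (Suc i)))"
    by (simp add: tt_def algebra_simps)
  also have "\<dots> = complex_of_real (eps (Suc i)) * (pz (Suc i) z * yy z (Suc i) - kap i * yy z i)"
    using e y_rec[of i z] by simp
  finally show ?thesis
    using e1 by (simp add: tt_def kap_def algebra_simps)
qed

end

end



context gjp
begin

definition Dm where "Dm = (\<Sum>i<s. d i)"

lemma d_le: "d j \<le> Dm"
proof -
  have "d j = d (j mod s)" using p_mod by simp
  also have "\<dots> \<le> Dm" unfolding Dm_def
    by (rule member_le_sum) (use s1 in auto)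
  finally show ?thesis .
qed

lemma Dm_pos: "Dm > 0" using d_le[of 0] deg_pos[of 0] by simp

lemma off_le: "off j \<le> j * Dm"
proof -
  have "off j \<le> (\<Sum>i<j. Dm)" unfolding off_def by (rule sum_mono) (rule d_le)
  thus ?thesis by simp
qed

lemma qq_mod: "qq z j c = qq z (j mod s) c"
  unfolding qq_def using p_mod[of j] by simp

lemma resolvent_e_eq:
  assumes ex1: "\<exists>!x. l2 x \<and> (\<forall>i. GJ_apply p eps b x i - z * x i = e0 i)"
    and sol: "l2 (xv z (tt z)) \<and> (\<forall>i. GJ_apply p eps b (xv z (tt z)) i - z * xv z (tt z) i = e0 i)"
  shows "GJ_resolvent_e p eps b z = xv z (tt z)"
proof -
  obtain x where x: "l2 x \<and> (\<forall>i. GJ_apply p eps b x i - z * x i = e0 i)"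
    and u: "\<And>y. l2 y \<and> (\<forall>i. GJ_apply p eps b y i - z * y i = e0 i) \<Longrightarrow> y = x"
    using ex1 by (elim ex1E) blast
  have "xv z (tt z) = x" using u[OF sol] .
  have "GJ_resolvent_e p eps b z = x"
    unfolding GJ_resolvent_e_def
    by (rule the_equality) (use x u in blast)+
  thus ?thesis using \<open>xv z (tt z) = x\<close> by simp
qed

context
  fixes z assumes zE: "z \<notin> Eset s p eps b" and P0: "PP (s - 1) z \<noteq> 0"
begin

lemma ww_nz: "ww z \<noteq> 0"
proof
  assume w0: "ww z = 0"
  have "ww z * ((tau z + rr z) / 2) = ((tau z)^2 - (rr z)^2) / 4"
    by (simp add: ww_def power2_eq_square field_simps)
  also have "\<dots> = 1" using rr_sq[OF zE] by simp
  finally show False using w0 by simp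
qed

definition Ymax where "Ymax = (\<Sum>i<s. cmod (yy z i))"
definition Qmax where "Qmax = (\<Sum>i<s. \<Sum>c<d i. cmod (qq z i c))"

lemma yy_bound: "cmod (yy z j) \<le> cmod (ww z) ^ (j div s) * Ymax"
proof -
  have "yy z j = ww z ^ (j div s) * yy z (j mod s)"
    using y_pow[OF zE P0, of "j mod s" "j div s"] by simp
  hence "cmod (yy z j) = cmod (ww z) ^ (j div s) * cmod (yy z (j mod s))"
    by (simp add: norm_mult norm_power)
  moreover have "cmod (yy z (j mod s)) \<le> Ymax" unfolding Ymax_def
    by (rule member_le_sum[where f = "\<lambda>i. cmod (yy z i)"]) (use s1 in auto)
  ultimately show ?thesis by (simp add: mult_left_mono)
qed

lemma qq_bound: "c < d j \<Longrightarrow> cmod (qq z j c) \<le> Qmax"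
proof -
  assume c: "c < d j"
  have c': "c < d (j mod s)" using c p_mod[of j] by simp
  have "cmod (qq z j c) = cmod (qq z (j mod s) c)" using qq_mod by simp
  also have "\<dots> \<le> (\<Sum>c<d (j mod s). cmod (qq z (j mod s) c))"
    by (rule member_le_sum[where f = "\<lambda>c. cmod (qq z (j mod s) c)"]) (use c' in auto)
  also have "\<dots> \<le> Qmax" unfolding Qmax_def
    by (rule member_le_sum[where f = "\<lambda>i. \<Sum>c<d i. cmod (qq z i c)"])
       (use s1 in \<open>auto intro: sum_nonneg\<close>)
  finally show ?thesis .
qed

lemma xv_bound: "cmod (xv z (tt z) n) \<le> Ymax * Qmax * cmod (ww z) ^ (n div (Dm * s))"
proof -
  obtain l c where n: "n = off l + c" "c < d l" using blk_decomp by blast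
  have xe: "xv z (tt z) n = tt z l * qq z l c" using xv_at n by simp
  have ae: "\<bar>eps l\<bar> = 1"
  proof -
    have "eps l = 1 \<or> eps l = -1" using gjd by (auto simp: GJ_data_def)
    thus ?thesis by auto
  qed
  have "cmod (tt z l) = cmod (yy z l)"
    unfolding tt_def norm_mult norm_of_real ae by simp
  have ltn: "n < Suc l * Dm" using n off_le[of "Suc l"] by (simp add: off_Suc)
  have "n div Dm \<le> l" using less_mult_imp_div_less[OF ltn] by simp
  hence "n div (Dm * s) \<le> l div s" by (simp add: div_mult2_eq div_le_mono)
  hence pw: "cmod (ww z) ^ (l div s) \<le> cmod (ww z) ^ (n div (Dm * s))"
    using ww_small[OF zE P0] by (intro power_decreasing) auto
  have Y0: "0 \<le> Ymax" unfolding Ymax_def by (simp add: sum_nonneg)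
  have Q0: "0 \<le> Qmax" unfolding Qmax_def by (simp add: sum_nonneg)
  have "cmod (xv z (tt z) n) = cmod (yy z l) * cmod (qq z l c)"
    using xe \<open>cmod (tt z l) = cmod (yy z l)\<close> by (simp add: norm_mult)
  also have "\<dots> \<le> (cmod (ww z) ^ (l div s) * Ymax) * Qmax"
    by (intro mult_mono yy_bound qq_bound n(2)) (use Y0 in auto)
  also have "\<dots> \<le> (cmod (ww z) ^ (n div (Dm * s)) * Ymax) * Qmax"
    by (intro mult_right_mono pw Y0 Q0)
  finally show ?thesis by (simp add: algebra_simps)
qed

lemma xv_l2: "l2 (xv z (tt z))"
proof -
  define a where "a = (cmod (ww z))^2"
  have a: "0 < a" "a < 1" using ww_nz ww_small[OF zE P0] by (simp_all add: a_def power_less_one_iff)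
  have N: "0 < Dm * s" using Dm_pos s1 by simp
  have S: "summable (\<lambda>n. (Ymax * Qmax)^2 * a ^ (n div (Dm * s)))"
    by (intro summable_mult summable_pow_div a N)
  have B: "norm ((cmod (xv z (tt z) n))^2) \<le> (Ymax * Qmax)^2 * a ^ (n div (Dm * s))" for n
  proof -
    have "cmod (xv z (tt z) n) \<le> Ymax * Qmax * cmod (ww z) ^ (n div (Dm * s))" by (rule xv_bound)
    hence "(cmod (xv z (tt z) n))^2 \<le> (Ymax * Qmax * cmod (ww z) ^ (n div (Dm * s)))^2"
      by (intro power_mono) auto
    thus ?thesis by (simp add: a_def power_mult_distrib power_mult[symmetric] mult.commute)
  qed
  show ?thesis unfolding l2_def
    by (rule summable_comparison_test'[OF S, of 0]) (rule B)
qed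

lemma m_eq:
  assumes res: "z \<in> GJ_resolvent_set p eps b"
  shows "m_function p eps b z = mu z"
proof -
  have l2e: "l2 e0"
  proof -
    have "(\<lambda>n. (cmod (e0 n))^2) = (\<lambda>n. if n = 0 then 1 else 0)" by (simp add: fun_eq_iff e0_def)
    moreover have "summable (\<lambda>n::nat. if n = 0 then (1::real) else 0)"
      using sums_pt[of 0 "1::real"] by (rule sums_summable)
    ultimately show ?thesis unfolding l2_def by simp
  qed
  have sol: "l2 (xv z (tt z)) \<and> (\<forall>i. GJ_apply p eps b (xv z (tt z)) i - z * xv z (tt z) i = e0 i)"
  proof
    show "l2 (xv z (tt z))" by (rule xv_l2)
    show "\<forall>i. GJ_apply p eps b (xv z (tt z)) i - z * xv z (tt z) i = e0 i"
      by (intro allI row_all R0[OF zE P0] RS[OF zE P0])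
  qed
  have allr: "\<forall>y. l2 y \<longrightarrow> (\<exists>!x. l2 x \<and> (\<forall>i. GJ_apply p eps b x i - z * x i = y i))"
    using res unfolding GJ_resolvent_set_def by (rule CollectD)
  have ex1: "\<exists>!x. l2 x \<and> (\<forall>i. GJ_apply p eps b x i - z * x i = e0 i)"
    by (rule mp[OF spec[OF allr, of e0] l2e])
  have R: "GJ_resolvent_e p eps b z = xv z (tt z)"
    by (rule resolvent_e_eq[OF ex1 sol])
  have "(\<lambda>i. gram_apply p eps (xv z (tt z)) i * cnj (e0 i)) = (\<lambda>i. if i = 0 then gram_apply p eps (xv z (tt z)) 0 else 0)"
    by (simp add: fun_eq_iff e0_def)
  hence "indef_inner p eps (xv z (tt z)) e0 = gram_apply p eps (xv z (tt z)) 0"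
    unfolding indef_inner_def using sums_unique[OF sums_pt[of 0 "gram_apply p eps (xv z (tt z)) 0"]]
    by simp
  also have "\<dots> = complex_of_real (eps 0) * tt z 0" by (rule gram0)
  also have "\<dots> = mu z" by (simp add: tt_def yy_def PP_0 QQ_0)
  finally show ?thesis unfolding m_function_def R .
qed

end

end



theorem proposition2p9:
  fixes s :: nat and p :: "nat \<Rightarrow> real poly" and eps b :: "nat \<Rightarrow> real"
  assumes "s \<ge> 1"
    and "GJ_data p eps b"
    and "periodic_data s p eps b"
  defines "c \<equiv> complex_of_real (eps (s - 1) * b (s - 1))"
  defines "D \<equiv> (\<lambda>z. (Ppol p eps b s z - c * Qpol p eps b (s - 1) z)\<^sup>2 - 4)"
  shows "\<exists>r :: complex \<Rightarrow> complex.
           r holomorphic_on (- Eset s p eps b)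
         \<and> (\<forall>z\<in>- Eset s p eps b. (r z)\<^sup>2 = D z)
         \<and> ((\<lambda>z. (- (Ppol p eps b s z + c * Qpol p eps b (s - 1) z) + r z)
                  / (2 * c * Ppol p eps b (s - 1) z)) \<longlongrightarrow> 0) at_infinity
         \<and> (\<forall>z. z \<in> GJ_resolvent_set p eps b \<and> z \<notin> Eset s p eps b \<and> Ppol p eps b (s - 1) z \<noteq> 0 \<longrightarrow>
              m_function p eps b z =
                (- (Ppol p eps b s z + c * Qpol p eps b (s - 1) z) + r z)
                  / (2 * c * Ppol p eps b (s - 1) z))"
proof -
  interpret gjp p eps b s
    by unfold_locales (use assms in auto)
  have cc: "c = cc" by (simp add: c_def cc_def)
  have PQ: "Ppol p eps b = (\<lambda>j z. PP j z)" "Qpol p eps b = (\<lambda>j z. QQ j z)"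
    by (simp_all add: fun_eq_iff Ppol_eq Qpol_eq)
  have Dz: "D z = (tau z)^2 - 4" for z by (simp add: D_def PQ cc tau_def)
  show ?thesis
  proof (intro exI[of _ rr] conjI ballI allI impI)
    show "rr holomorphic_on (- Eset s p eps b)" by (rule rr_holo)
  next
    fix z assume "z \<in> - Eset s p eps b"
    thus "(rr z)^2 = D z" using rr_sq Dz by simp
  next
    show "((\<lambda>z. (- (Ppol p eps b s z + c * Qpol p eps b (s - 1) z) + rr z)
                  / (2 * c * Ppol p eps b (s - 1) z)) \<longlongrightarrow> 0) at_infinity"
      unfolding PQ cc by (rule main_limit)
  next
    fix z assume h: "z \<in> GJ_resolvent_set p eps b \<and> z \<notin> Eset s p eps b \<and> Ppol p eps b (s - 1) z \<noteq> 0"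
    hence zE: "z \<notin> Eset s p eps b" and P0: "PP (s - 1) z \<noteq> 0" and res: "z \<in> GJ_resolvent_set p eps b"
      by (simp_all add: PQ)
    show "m_function p eps b z = (- (Ppol p eps b s z + c * Qpol p eps b (s - 1) z) + rr z)
                  / (2 * c * Ppol p eps b (s - 1) z)"
      unfolding PQ cc m_eq[OF zE P0 res] mu_def ..
  qed
qed


end
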